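(* Let $(\widetilde{\mathbf{X}},Y)$ with $\widetilde{\mathbf{X}}\in\mathbb{R}^d$ satisfy $Y=\mu(\widetilde{\mathbf{X}})+\varepsilon$, where $\mu(\widetilde{\mathbf{X}})=\mathbb{E}[Y\mid\widetilde{\mathbf{X}}]$ and $\|\mu\|_\infty\le\mu_{max}<\infty$. Assume that conditionally on $\widetilde{\mathbf{X}}=\widetilde{\mathbf{x}}$, $\varepsilon$ is sub-Gaussian with Orlicz norm in $(0,s_{max}]$ and conditional variance at most $\sigma^2_{max}$, uniformly in $\widetilde{\mathbf{x}}$. Let $(\widetilde{\mathbf{x}}_\ell,y_\ell)_{\ell\le N}$ be i.i.d. copies. Assume there are constants $C_d>C_u>0$ and events $\mathcal{B}_N$ on $\widetilde{\mathbf{X}}^N=(\widetilde{\mathbf{x}}_1,\dots,\widetilde{\mathbf{x}}_N)$ with $\mathbb{P}(\mathcal{B}_N)\to1$, such that on $\mathcal{B}_N$, with $K_0=\lfloor\ln(N)/(2C_d+1)\rfloor$, the Gram eigenvalues satisfy $\sum_{k=K_0}^N\widehat\mu_k\le\sum_{k=K_0}^Ne^{-C_uk}$ and $\widehat\mu_{K_0}\ge e^{-C_dK_0}$. Let $\widehat f^{(m_{stop})}$ be the $L^2$-boosting estimate with $m_{stop}=N^{\frac14\frac{C_u+C_d+1/2}{C_d+1}}$. Then there exist $\delta>0$ and a function $h(N)\in o(N^{1/4-\delta})$ such that $$\mathbb{P}\Big(\big\{\|\widehat f^{(m_{stop})}\|_H>h(N)\big\}\cap\{\widetilde{\mathbf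{X}}^N\in\mathcal{B}_N\}\Big)\to0\qquad(N\to\infty).$$
   Context: $H=H_1\oplus\cdots\oplus H_d$ is the additive RKHS of Gaussian kernels $K_j(x,x')=\exp(-|x-x'|^2/(2\varsigma_j))$, with kernel $K=\sum_jK_j$. Gram matrix: $G_{ij}=K(\widetilde{\mathbf{x}}_i,\widetilde{\mathbf{x}}_j)/N$, with eigenvalues $\widehat\mu_1\ge\dots\ge\widehat\mu_N$; it is assumed invertible. Orlicz norm: $s(\varepsilon)=\inf\{r>0:\mathbb{E}[\exp(\varepsilon^2/r^2)]\le2\}$. Base learner: kernel ridge regression with fixed $\lambda>0$, fitting $\frac1{\sqrt N}\sum_\ell\beta_\ell K(\cdot,\widetilde{\mathbf{x}}_\ell)$ with $\beta=\frac1{\sqrt N}(G+\lambda I)^{-1}u$. $L^2$-boosting: $\widehat f^{(0)}=0$, and each step adds the base learner fit to the residuals. Fitted values after $m$ steps are $(I-(I-S)^m)y^N$ with $S=G(G+\lambda I)^{-1}$. *)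

theory Defs
  imports "HOL-Probability.Probability" "HOL-Library.Landau_Symbols"
    "Jordan_Normal_Form.Char_Poly" "Jordan_Normal_Form.Gauss_Jordan_Elimination"
begin

definition add_kernel :: "('d::finite \<Rightarrow> real) \<Rightarrow> real^'d \<Rightarrow> real^'d \<Rightarrow> real" where
  "add_kernel vs x x' = (\<Sum>j\<in>UNIV. exp (- ((vec_nth x j - vec_nth x' j)^2) / (2 * vs j)))"

definition gram :: "('d::finite \<Rightarrow> real) \<Rightarrow> nat \<Rightarrow> (nat \<Rightarrow> real^'d) \<Rightarrow> real mat" where
  "gram vs N xs = mat N N (\<lambda>(i,j). add_kernel vs (xs i) (xs j) / real N)"

text \<open>Eigenvalues of the (symmetric) Gram matrix, with multiplicity, in decreasing order:
  mu_hat_1 >= ... >= mu_hat_N; mu_hat k (1-based) is element k-1 of this list.\<close>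
definition gram_eigs :: "real mat \<Rightarrow> real list" where
  "gram_eigs G = rev (sorted_list_of_multiset (proots (char_poly G)))"

definition mu_hat :: "real mat \<Rightarrow> nat \<Rightarrow> real" where
  "mu_hat G k = gram_eigs G ! (k - 1)"

text \<open>Base learner: kernel ridge regression fitted to u. It returns the coefficient vector c of
  the fitted function sum_l c_l K(., x_l), i.e. c = beta / sqrt N with
  beta = (1/sqrt N) (G + lambda I)^{-1} u.\<close>
definition krr_coef :: "('d::finite \<Rightarrow> real) \<Rightarrow> real \<Rightarrow> nat \<Rightarrow> (nat \<Rightarrow> real^'d) \<Rightarrow> real vec \<Rightarrow> real vec" where
  "krr_coef vs lam N xs u =
     (1 / sqrt (real N)) \<cdot>\<^sub>v
       ((1 / sqrt (real N)) \<cdot>\<^sub>v (the (mat_inverse (gram vs N xs + lam \<cdot>\<^sub>m 1\<^sub>m N)) *\<^sub>v u))"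

definition fitted_vals :: "('d::finite \<Rightarrow> real) \<Rightarrow> nat \<Rightarrow> (nat \<Rightarrow> real^'d) \<Rightarrow> real vec \<Rightarrow> real vec" where
  "fitted_vals vs N xs c = vec N (\<lambda>i. \<Sum>l<N. vec_index c l * add_kernel vs (xs i) (xs l))"

text \<open>One L2-boosting step on a state (coefficients of the current estimate, current residuals):
  fit the base learner to the residuals, add it to the estimate, update residuals.\<close>
definition boost_step :: "('d::finite \<Rightarrow> real) \<Rightarrow> real \<Rightarrow> nat \<Rightarrow> (nat \<Rightarrow> real^'d) \<Rightarrow>
    real vec \<times> real vec \<Rightarrow> real vec \<times> real vec" where
  "boost_step vs lam N xs s =
     (let b = krr_coef vs lam N xs (snd s)
      in (fst s + b, snd s - fitted_vals vs N xs b))"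

definition boost_coef :: "('d::finite \<Rightarrow> real) \<Rightarrow> real \<Rightarrow> nat \<Rightarrow> (nat \<Rightarrow> real^'d) \<Rightarrow>
    real vec \<Rightarrow> nat \<Rightarrow> real vec" where
  "boost_coef vs lam N xs y m = fst ((boost_step vs lam N xs ^^ m) (0\<^sub>v N, y))"

definition H_norm :: "('d::finite \<Rightarrow> real) \<Rightarrow> nat \<Rightarrow> (nat \<Rightarrow> real^'d) \<Rightarrow> real vec \<Rightarrow> real" where
  "H_norm vs N xs c =
     sqrt (\<Sum>l<N. \<Sum>l'<N. vec_index c l * vec_index c l' * add_kernel vs (xs l) (xs l'))"

definition orlicz_set :: "'a measure \<Rightarrow> ('a \<Rightarrow> real) \<Rightarrow> real set" where
  "orlicz_set M e = {r. r > 0 \<and> (\<integral>\<^sup>+ w. ennreal (exp ((e w)^2 / r^2)) \<partial>M) \<le> 2}"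

definition orlicz_norm :: "'a measure \<Rightarrow> ('a \<Rightarrow> real) \<Rightarrow> real" where
  "orlicz_norm M e = Inf (orlicz_set M e)"

text \<open>Joint law of (X, Y) from the law PX of X and the conditional law Q x of Y given X = x.\<close>
definition joint_law :: "(real^'d) measure \<Rightarrow> (real^'d \<Rightarrow> real measure) \<Rightarrow> ((real^'d) \<times> real) measure" where
  "joint_law PX Q = PX \<bind> (\<lambda>x. distr (Q x) borel (\<lambda>y. (x, y)))"

definition sample_law :: "(real^'d) measure \<Rightarrow> (real^'d \<Rightarrow> real measure) \<Rightarrow> nat \<Rightarrow> (nat \<Rightarrow> (real^'d) \<times> real) measure" where
  "sample_law PX Q N = PiM {..<N} (\<lambda>_. joint_law PX Q)"

definition sample_x :: "nat \<Rightarrow> (nat \<Rightarrow> (real^'d) \<times> real) \<Rightarrow> nat \<Rightarrow> real^'d" where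
  "sample_x N w = restrict (\<lambda>i. fst (w i)) {..<N}"

definition sample_y :: "nat \<Rightarrow> (nat \<Rightarrow> (real^'d) \<times> real) \<Rightarrow> real vec" where
  "sample_y N w = vec N (\<lambda>i. snd (w i))"

end

theory Submission
  imports Defs
begin

unbundle no inner_syntax

lemma sprod_nonneg: "0 \<le> (v::real vec) \<bullet> v"
  unfolding scalar_prod_def by (auto intro!: sum_nonneg)

locale boostLA =
  fixes n :: nat and G Pi :: "real mat" and lam :: real
  assumes G: "G \<in> carrier_mat n n" and Pi: "Pi \<in> carrier_mat n n"
  and Gsym: "transpose_mat G = G"
  and psd: "\<And>v. v \<in> carrier_vec n \<Longrightarrow> 0 \<le> v \<bullet> (G *\<^sub>v v)"
  and lam: "lam > 0"
  and inv: "(G + lam \<cdot>\<^sub>m 1\<^sub>m n) * Pi = 1\<^sub>m n"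
begin

definition T :: "real vec \<Rightarrow> real vec" where "T v = lam \<cdot>\<^sub>v (Pi *\<^sub>v v)"

lemma T_carrier[simp]: "v \<in> carrier_vec n \<Longrightarrow> T v \<in> carrier_vec n"
  unfolding T_def using Pi by auto

lemma Pi_carrier[simp]: "v \<in> carrier_vec n \<Longrightarrow> Pi *\<^sub>v v \<in> carrier_vec n"
  using Pi by auto

lemma G_carrier[simp]: "v \<in> carrier_vec n \<Longrightarrow> G *\<^sub>v v \<in> carrier_vec n"
  using G by auto

lemma PPi: assumes v: "v \<in> carrier_vec n"
  shows "G *\<^sub>v (Pi *\<^sub>v v) + lam \<cdot>\<^sub>v (Pi *\<^sub>v v) = v"
proof -
  have "((G + lam \<cdot>\<^sub>m 1\<^sub>m n) * Pi) *\<^sub>v v = v" using inv v by simp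
  moreover have "((G + lam \<cdot>\<^sub>m 1\<^sub>m n) * Pi) *\<^sub>v v = (G + lam \<cdot>\<^sub>m 1\<^sub>m n) *\<^sub>v (Pi *\<^sub>v v)"
    using G Pi v by (intro assoc_mult_mat_vec) auto
  moreover have "(G + lam \<cdot>\<^sub>m 1\<^sub>m n) *\<^sub>v (Pi *\<^sub>v v) = G *\<^sub>v (Pi *\<^sub>v v) + (lam \<cdot>\<^sub>m 1\<^sub>m n) *\<^sub>v (Pi *\<^sub>v v)"
    using G Pi v by (intro add_mult_distrib_mat_vec) auto
  moreover have "(lam \<cdot>\<^sub>m 1\<^sub>m n) *\<^sub>v (Pi *\<^sub>v v) = lam \<cdot>\<^sub>v (Pi *\<^sub>v v)"
    using Pi v by (intro eq_vecI) (auto simp: scalar_prod_def if_distrib if_distribR sum.delta cong: if_cong)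
  ultimately show ?thesis by simp
qed

lemma Gsym': "u \<in> carrier_vec n \<Longrightarrow> v \<in> carrier_vec n \<Longrightarrow> (G *\<^sub>v u) \<bullet> v = u \<bullet> (G *\<^sub>v v)"
  using transpose_vec_mult_scalar[OF G, of v u] Gsym by simp

lemma Tsym: assumes u: "u \<in> carrier_vec n" and v: "v \<in> carrier_vec n"
  shows "u \<bullet> T v = T u \<bullet> v"
proof -
  define a where "a = Pi *\<^sub>v u"
  define b where "b = Pi *\<^sub>v v"
  have a: "a \<in> carrier_vec n" and b: "b \<in> carrier_vec n" using u v by (auto simp: a_def b_def)
  have ua: "u = G *\<^sub>v a + lam \<cdot>\<^sub>v a" using PPi[OF u] a_def by simp
  have vb: "v = G *\<^sub>v b + lam \<cdot>\<^sub>v b" using PPi[OF v] b_def by simp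
  have "u \<bullet> b = (G *\<^sub>v a) \<bullet> b + lam * (a \<bullet> b)"
    unfolding ua using a b by (simp add: add_scalar_prod_distrib[of _ n])
  also have "\<dots> = a \<bullet> (G *\<^sub>v b) + lam * (a \<bullet> b)" using Gsym' a b by simp
  also have "\<dots> = a \<bullet> v" unfolding vb using a b by (simp add: scalar_prod_add_distrib[of _ n])
  finally have "u \<bullet> b = a \<bullet> v" .
  then show ?thesis unfolding T_def a_def[symmetric] b_def[symmetric] using u v a b by simp
qed

lemma T_pos: assumes v: "v \<in> carrier_vec n" shows "0 \<le> v \<bullet> T v" and "v \<bullet> T v \<le> v \<bullet> v"
  and "T v \<bullet> T v \<le> v \<bullet> v"
proof -
  define w where "w = Pi *\<^sub>v v"
  have w: "w \<in> carrier_vec n" using v by (simp add: w_def)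
  have vw: "v = G *\<^sub>v w + lam \<cdot>\<^sub>v w" using PPi[OF v] w_def by simp
  have g: "0 \<le> w \<bullet> (G *\<^sub>v w)" using psd[OF w] .
  have ww: "0 \<le> w \<bullet> w" using w by (simp add: sprod_nonneg)
  have gg: "0 \<le> (G *\<^sub>v w) \<bullet> (G *\<^sub>v w)" using w by (simp add: sprod_nonneg)
  have gw: "(G *\<^sub>v w) \<bullet> w = w \<bullet> (G *\<^sub>v w)" using w by (simp add: comm_scalar_prod[of _ n])
  have e1: "v \<bullet> T v = lam * (w \<bullet> (G *\<^sub>v w)) + lam * lam * (w \<bullet> w)"
    unfolding T_def w_def[symmetric] using w gw
    by (subst (1) vw) (simp add: add_scalar_prod_distrib[of _ n] algebra_simps)
  have e2: "v \<bullet> v = (G *\<^sub>v w) \<bullet> (G *\<^sub>v w) + 2 * lam * (w \<bullet> (G *\<^sub>v w)) + lam * lam * (w \<bullet> w)"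
    using w gw comm_scalar_prod[of w n "G *\<^sub>v w"]
    by (subst (1 2) vw) (simp add: add_scalar_prod_distrib[of _ n] scalar_prod_add_distrib[of _ n] algebra_simps)
  have e3: "T v \<bullet> T v = lam * lam * (w \<bullet> w)"
    unfolding T_def w_def[symmetric] using w by simp
  show "0 \<le> v \<bullet> T v" using e1 g ww lam by simp
  show "v \<bullet> T v \<le> v \<bullet> v" using e1 e2 g ww gg lam by (simp add: mult_nonneg_nonneg)
  show "T v \<bullet> T v \<le> v \<bullet> v" using e3 e2 g ww gg lam by (simp add: mult_nonneg_nonneg)
qed

lemma Tpow_carrier[simp]: "v \<in> carrier_vec n \<Longrightarrow> (T ^^ k) v \<in> carrier_vec n"
  by (induction k) auto

lemma Tpow_sym: assumes "u \<in> carrier_vec n" "v \<in> carrier_vec n"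
  shows "u \<bullet> (T ^^ (i + j)) v = (T ^^ i) u \<bullet> (T ^^ j) v"
  using assms
proof (induction i arbitrary: u)
  case 0 then show ?case by simp
next
  case (Suc i)
  have "u \<bullet> (T ^^ (Suc i + j)) v = u \<bullet> T ((T ^^ (i + j)) v)" by simp
  also have "\<dots> = T u \<bullet> (T ^^ (i + j)) v" using Suc.prems by (simp add: Tsym)
  also have "\<dots> = (T ^^ i) (T u) \<bullet> (T ^^ j) v" using Suc by simp
  also have "\<dots> = (T ^^ Suc i) u \<bullet> (T ^^ j) v" by (simp add: funpow_swap1)
  finally show ?case .
qed

lemma Tpow_contr: "y \<in> carrier_vec n \<Longrightarrow> (T ^^ j) y \<bullet> (T ^^ j) y \<le> y \<bullet> y"
proof (induction j)
  case 0 then show ?case by simp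
next
  case (Suc j)
  then show ?case using T_pos(3)[of "(T ^^ j) y"] by simp
qed

lemma Tpow_bounds: assumes y: "y \<in> carrier_vec n"
  shows "0 \<le> y \<bullet> (T ^^ k) y \<and> y \<bullet> (T ^^ k) y \<le> y \<bullet> y"
proof (cases "even k")
  case True
  then obtain j where "k = 2 * j" by (rule evenE)
  then have k: "k = j + j" by simp
  have "y \<bullet> (T ^^ k) y = (T ^^ j) y \<bullet> (T ^^ j) y" unfolding k using Tpow_sym[OF y y, of j j] by simp
  then show ?thesis using Tpow_contr[OF y, of j] sprod_nonneg by simp
next
  case False
  then obtain j where "k = 2 * j + 1" by (rule oddE)
  then have k: "k = j + Suc j" by simp
  define z where "z = (T ^^ j) y"
  have z: "z \<in> carrier_vec n" using y z_def by simp
  have "y \<bullet> (T ^^ k) y = z \<bullet> T z" unfolding k z_def using Tpow_sym[OF y y, of j "Suc j"] by simp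
  then show ?thesis using T_pos[OF z] Tpow_contr[OF y, of j] z_def by simp
qed

definition stp :: "real \<Rightarrow> real vec \<times> real vec \<Rightarrow> real vec \<times> real vec" where
  "stp s p = (fst p + s \<cdot>\<^sub>v (Pi *\<^sub>v snd p), snd p - G *\<^sub>v (Pi *\<^sub>v snd p))"

lemma stp_inv: assumes y: "y \<in> carrier_vec n"
  shows "snd ((stp s ^^ k) (0\<^sub>v n, y)) = (T ^^ k) y \<and> fst ((stp s ^^ k) (0\<^sub>v n, y)) \<in> carrier_vec n
    \<and> (\<forall>u \<in> carrier_vec n. fst ((stp s ^^ k) (0\<^sub>v n, y)) \<bullet> u
          = (s / lam) * (\<Sum>j<k. (T ^^ Suc j) y \<bullet> u))
    \<and> G *\<^sub>v fst ((stp s ^^ k) (0\<^sub>v n, y)) = s \<cdot>\<^sub>v (y - (T ^^ k) y)"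
proof (induction k)
  case 0
  then show ?case using y G by (auto intro!: eq_vecI)
next
  case (Suc k)
  define c where "c = fst ((stp s ^^ k) (0\<^sub>v n, y))"
  define r where "r = (T ^^ k) y"
  define w where "w = Pi *\<^sub>v r"
  have r: "r \<in> carrier_vec n" using y r_def by simp
  have w: "w \<in> carrier_vec n" using r w_def by simp
  have IH: "snd ((stp s ^^ k) (0\<^sub>v n, y)) = r" "c \<in> carrier_vec n"
    "\<And>u. u \<in> carrier_vec n \<Longrightarrow> c \<bullet> u = (s / lam) * (\<Sum>j<k. (T ^^ Suc j) y \<bullet> u)"
    "G *\<^sub>v c = s \<cdot>\<^sub>v (y - r)"
    using Suc.IH unfolding c_def r_def by auto
  have st: "(stp s ^^ Suc k) (0\<^sub>v n, y) = (c + s \<cdot>\<^sub>v w, r - G *\<^sub>v w)"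
    using IH(1) by (simp add: stp_def c_def w_def)
  have rw: "G *\<^sub>v w + lam \<cdot>\<^sub>v w = r" using PPi[OF r] w_def by simp
  have Tr: "T r = lam \<cdot>\<^sub>v w" by (simp add: T_def w_def)
  have TSk: "(T ^^ Suc k) y = T r" by (simp add: r_def)
  have Gw: "G *\<^sub>v w \<in> carrier_vec n" using w by simp
  have 1: "r - G *\<^sub>v w = T r"
    unfolding Tr using rw[symmetric] w Gw G by (intro eq_vecI) auto
  have 2: "(c + s \<cdot>\<^sub>v w) \<bullet> u = (s / lam) * (\<Sum>j<Suc k. (T ^^ Suc j) y \<bullet> u)" if u: "u \<in> carrier_vec n" for u
  proof -
    have "(c + s \<cdot>\<^sub>v w) \<bullet> u = c \<bullet> u + s * (w \<bullet> u)"
      using IH(2) w u by (simp add: add_scalar_prod_distrib[of _ n])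
    moreover have "w \<bullet> u = (T r \<bullet> u) / lam" using Tr w u lam by simp
    moreover have "s * (x / lam) = s / lam * x" for x by simp
    ultimately show ?thesis using IH(3)[OF u] TSk by (simp add: distrib_left)
  qed
  have 3: "G *\<^sub>v (c + s \<cdot>\<^sub>v w) = s \<cdot>\<^sub>v (y - T r)"
  proof -
    have "G *\<^sub>v (c + s \<cdot>\<^sub>v w) = G *\<^sub>v c + G *\<^sub>v (s \<cdot>\<^sub>v w)"
      using G IH(2) w by (intro mult_add_distrib_mat_vec) auto
    also have "G *\<^sub>v (s \<cdot>\<^sub>v w) = s \<cdot>\<^sub>v (G *\<^sub>v w)"
      using G w by (intro eq_vecI) (auto simp: scalar_prod_def sum_distrib_left algebra_simps)
    finally show ?thesis unfolding IH(4) using 1[symmetric] y r w Gw G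
      by (intro eq_vecI) (auto simp: algebra_simps)
  qed
  have 4: "c + s \<cdot>\<^sub>v w \<in> carrier_vec n" using IH(2) w by simp
  show ?case unfolding st fst_conv snd_conv TSk using 1 2 3 4 by blast
qed


lemma stp_bound: fixes s :: real and k :: nat assumes y: "y \<in> carrier_vec n" and s: "s \<ge> 0"
  shows "fst ((stp s ^^ k) (0\<^sub>v n, y)) \<bullet> (G *\<^sub>v fst ((stp s ^^ k) (0\<^sub>v n, y)))
     \<le> s * s * real k / lam * (y \<bullet> y)"
proof -
  define c where "c = fst ((stp s ^^ k) (0\<^sub>v n, y))"
  have I: "c \<in> carrier_vec n" "\<And>u. u \<in> carrier_vec n \<Longrightarrow> c \<bullet> u = (s / lam) * (\<Sum>j<k. (T ^^ Suc j) y \<bullet> u)"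
    "G *\<^sub>v c = s \<cdot>\<^sub>v (y - (T ^^ k) y)"
    using stp_inv[OF y, where s=s and k=k] unfolding c_def by auto
  have yk: "y - (T ^^ k) y \<in> carrier_vec n" using y by simp
  have "c \<bullet> (G *\<^sub>v c) = s * (c \<bullet> (y - (T ^^ k) y))" unfolding I(3) using I(1) yk by simp
  also have "\<dots> = s * ((s / lam) * (\<Sum>j<k. (T ^^ Suc j) y \<bullet> (y - (T ^^ k) y)))" using I(2)[OF yk] by simp
  also have "\<dots> \<le> s * ((s / lam) * (\<Sum>j<k. y \<bullet> y))"
  proof -
    have "(T ^^ Suc j) y \<bullet> (y - (T ^^ k) y) \<le> y \<bullet> y" for j
    proof -
      have "(T ^^ Suc j) y \<bullet> (y - (T ^^ k) y) = (T ^^ Suc j) y \<bullet> y - (T ^^ Suc j) y \<bullet> (T ^^ k) y"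
        using y by (intro scalar_prod_minus_distrib[of _ n]) auto
      moreover have "(T ^^ Suc j) y \<bullet> y = y \<bullet> (T ^^ Suc j) y" using y by (simp add: comm_scalar_prod[of _ n])
      moreover have "(T ^^ Suc j) y \<bullet> (T ^^ k) y = y \<bullet> (T ^^ (Suc j + k)) y" using Tpow_sym[OF y y, of "Suc j" k] by (simp only: add_Suc)
      ultimately show ?thesis using Tpow_bounds[OF y, of "Suc j"] Tpow_bounds[OF y, of "Suc j + k"] by simp
    qed
    then have "(\<Sum>j<k. (T ^^ Suc j) y \<bullet> (y - (T ^^ k) y)) \<le> (\<Sum>j<k. y \<bullet> y)" by (intro sum_mono) auto
    then show ?thesis using s lam by (intro mult_left_mono) (auto intro: divide_nonneg_pos)
  qed
  also have "\<dots> = s * s * real k / lam * (y \<bullet> y)" by simp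
  finally show ?thesis unfolding c_def .
qed

end

lemma gauss_psd:
  fixes a v :: "nat \<Rightarrow> real" and s :: real and I :: "nat set"
  assumes s: "s > 0" and I: "finite I"
  shows "0 \<le> (\<Sum>i\<in>I. \<Sum>j\<in>I. v i * v j * exp (- ((a i - a j)^2) / (2 * s)))"
proof -
  define e where "e i = exp (- ((a i)^2) / (2 * s))" for i
  define u where "u i = v i * e i" for i
  define t where "t i j n = u i * u j * ((a i * a j / s) ^ n / fact n)" for i j and n :: nat
  have k: "exp (- ((a i - a j)^2) / (2 * s)) = e i * e j * exp (a i * a j / s)" for i j
  proof -
    have "- ((a i - a j)^2) / (2 * s) = - ((a i)^2) / (2 * s) + - ((a j)^2) / (2 * s) + a i * a j / s"
      using s by (simp add: field_simps power2_diff)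
    then show ?thesis unfolding e_def by (simp add: exp_add[symmetric])
  qed
  have ser: "(\<lambda>n. t i j n) sums (u i * u j * exp (a i * a j / s))" for i j
  proof -
    have "(\<lambda>n. (a i * a j / s) ^ n /\<^sub>R fact n) sums exp (a i * a j / s)" by (rule exp_converges)
    then have "(\<lambda>n. (a i * a j / s) ^ n / fact n) sums exp (a i * a j / s)"
      by (simp add: divide_inverse_commute scaleR_conv_of_real)
    then show ?thesis unfolding t_def by (rule sums_mult)
  qed
  have ser2: "(\<lambda>n. \<Sum>i\<in>I. \<Sum>j\<in>I. t i j n) sums (\<Sum>i\<in>I. \<Sum>j\<in>I. u i * u j * exp (a i * a j / s))"
    by (intro sums_sum ser)
  have nn: "0 \<le> (\<Sum>i\<in>I. \<Sum>j\<in>I. t i j n)" for n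
  proof -
    have "(\<Sum>i\<in>I. \<Sum>j\<in>I. t i j n) = (\<Sum>i\<in>I. u i * a i ^ n) * (\<Sum>j\<in>I. u j * a j ^ n) / (s ^ n * fact n)"
      unfolding t_def sum_product sum_divide_distrib
      by (intro sum.cong refl) (simp add: power_mult_distrib power_divide)
    also have "\<dots> \<ge> 0" using s by (simp add: power2_eq_square[symmetric])
    finally show ?thesis .
  qed
  have "0 \<le> (\<Sum>i\<in>I. \<Sum>j\<in>I. u i * u j * exp (a i * a j / s))"
    using sums_le[OF _ sums_zero ser2] nn by auto
  also have "\<dots> = (\<Sum>i\<in>I. \<Sum>j\<in>I. v i * v j * exp (- ((a i - a j)^2) / (2 * s)))"
    unfolding k u_def by (intro sum.cong refl) (simp add: algebra_simps)
  finally show ?thesis .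
qed

lemma add_kernel_sym: "add_kernel vs x x' = add_kernel vs x' x"
  unfolding add_kernel_def by (simp add: power2_commute)

lemma gram_carrier: "gram vs N xs \<in> carrier_mat N N"
  unfolding gram_def by simp

lemma gram_sym: "transpose_mat (gram vs N xs) = gram vs N xs"
  unfolding gram_def by (intro eq_matI) (auto simp: add_kernel_sym)

lemma gram_psd:
  assumes vs: "\<And>j. vs j > 0" and v: "v \<in> carrier_vec N"
  shows "0 \<le> v \<bullet> (gram vs N xs *\<^sub>v v)"
proof -
  define E where "E d i j = exp (- ((vec_nth (xs i) d - vec_nth (xs j) d)^2) / (2 * vs d))" for d i j
  have "v \<bullet> (gram vs N xs *\<^sub>v v) = (\<Sum>i\<in>{0..<N}. v $ i * (\<Sum>j\<in>{0..<N}. (add_kernel vs (xs i) (xs j) / real N) * v $ j))"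
    using v unfolding scalar_prod_def gram_def by (simp add: scalar_prod_def)
  also have "\<dots> = (\<Sum>i\<in>{0..<N}. \<Sum>j\<in>{0..<N}. \<Sum>d\<in>UNIV. v $ i * v $ j * E d i j / real N)"
    unfolding add_kernel_def E_def
    by (intro sum.cong refl) (simp add: sum_distrib_left sum_distrib_right sum_divide_distrib algebra_simps)
  also have "\<dots> = (\<Sum>d\<in>UNIV. \<Sum>i\<in>{0..<N}. \<Sum>j\<in>{0..<N}. v $ i * v $ j * E d i j / real N)"
    by (subst sum.swap) (simp add: sum.swap[of _ "{0..<N}" UNIV])
  also have "\<dots> \<ge> 0"
  proof (rule sum_nonneg)
    fix d
    have "0 \<le> (\<Sum>i\<in>{0..<N}. \<Sum>j\<in>{0..<N}. v $ i * v $ j * E d i j)"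
      unfolding E_def by (rule gauss_psd[OF vs]) simp
    then show "0 \<le> (\<Sum>i\<in>{0..<N}. \<Sum>j\<in>{0..<N}. v $ i * v $ j * E d i j / real N)"
      by (simp add: sum_divide_distrib[symmetric])
  qed
  finally show ?thesis .
qed

lemma sprod_self_eq0: "(v::real vec) \<bullet> v = 0 \<Longrightarrow> v = 0\<^sub>v (dim_vec v)"
  unfolding scalar_prod_def
  by (intro eq_vecI) (auto simp: sum_nonneg_eq_0_iff)

lemma P_inverse:
  assumes G: "G \<in> carrier_mat N N" and psd: "\<And>v. v \<in> carrier_vec N \<Longrightarrow> 0 \<le> v \<bullet> (G *\<^sub>v v)"
    and lam: "(lam::real) > 0"
  shows "\<exists>Pi. mat_inverse (G + lam \<cdot>\<^sub>m 1\<^sub>m N) = Some Pi \<and> (G + lam \<cdot>\<^sub>m 1\<^sub>m N) * Pi = 1\<^sub>m N \<and> Pi \<in> carrier_mat N N"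
proof -
  let ?P = "G + lam \<cdot>\<^sub>m 1\<^sub>m N"
  have P: "?P \<in> carrier_mat N N" using G by simp
  have "det ?P \<noteq> 0"
  proof
    assume "det ?P = 0"
    then obtain v where v: "v \<in> carrier_vec N" "v \<noteq> 0\<^sub>v N" "?P *\<^sub>v v = 0\<^sub>v N"
      using det_0_iff_vec_prod_zero_field[OF P] by auto
    have "?P *\<^sub>v v = G *\<^sub>v v + (lam \<cdot>\<^sub>m 1\<^sub>m N) *\<^sub>v v"
      using G v by (intro add_mult_distrib_mat_vec) auto
    also have "(lam \<cdot>\<^sub>m 1\<^sub>m N) *\<^sub>v v = lam \<cdot>\<^sub>v v"
      using v by (intro eq_vecI) (auto simp: scalar_prod_def if_distrib if_distribR sum.delta cong: if_cong)
    finally have "v \<bullet> (?P *\<^sub>v v) = v \<bullet> (G *\<^sub>v v) + lam * (v \<bullet> v)"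
      using G v by (simp add: scalar_prod_add_distrib[of _ N])
    then have "v \<bullet> (G *\<^sub>v v) + lam * (v \<bullet> v) = 0" using v by simp
    moreover have "0 \<le> v \<bullet> (G *\<^sub>v v)" using psd v by simp
    moreover have "0 \<le> v \<bullet> v" by (rule sprod_nonneg)
    ultimately have "v \<bullet> v = 0" using lam by (smt (verit) mult_pos_pos)
    then have "v = 0\<^sub>v N" using sprod_self_eq0[of v] v by simp
    with v show False by simp
  qed
  then have U: "?P \<in> Units (ring_mat TYPE(real) N ())" using det_non_zero_imp_unit[OF P] by auto
  have "mat_inverse ?P \<noteq> None" using U mat_inverse(1)[OF P, where b="()"] by blast
  then obtain Pi where "mat_inverse ?P = Some Pi" by auto
  then show ?thesis using mat_inverse(2)[OF P] by auto
qed


lemma fitted_eq: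
  assumes w: "w \<in> carrier_vec N"
  shows "fitted_vals vs N xs ((1 / real N) \<cdot>\<^sub>v w) = gram vs N xs *\<^sub>v w"
  using w unfolding fitted_vals_def gram_def
  by (intro eq_vecI) (auto simp: scalar_prod_def lessThan_atLeast0 intro!: sum.cong)

lemma krr_eq:
  "krr_coef vs lam N xs r = (1 / real N) \<cdot>\<^sub>v (the (mat_inverse (gram vs N xs + lam \<cdot>\<^sub>m 1\<^sub>m N)) *\<^sub>v r)"
proof -
  have "(1 / sqrt (real N)) * (1 / sqrt (real N)) = 1 / real N" by simp
  then show ?thesis unfolding krr_coef_def by (simp add: smult_smult_assoc)
qed

lemma det_bound:
  assumes vs: "\<And>j. vs j > 0" and lam: "lam > 0" and N: "N > 0" and y: "y \<in> carrier_vec N"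
  shows "H_norm vs N xs (boost_coef vs lam N xs y m) \<le> sqrt (real m / (lam * real N) * (y \<bullet> y))"
proof -
  define G where "G = gram vs N xs"
  have G: "G \<in> carrier_mat N N" unfolding G_def by (rule gram_carrier)
  have psd: "\<And>v. v \<in> carrier_vec N \<Longrightarrow> 0 \<le> v \<bullet> (G *\<^sub>v v)" unfolding G_def by (rule gram_psd[OF vs])
  from P_inverse[OF G psd lam] obtain Pi where Pi: "mat_inverse (G + lam \<cdot>\<^sub>m 1\<^sub>m N) = Some Pi" "(G + lam \<cdot>\<^sub>m 1\<^sub>m N) * Pi = 1\<^sub>m N"
    "Pi \<in> carrier_mat N N" by blast
  have Gs: "transpose_mat G = G" unfolding G_def by (rule gram_sym)
  interpret B: boostLA N G Pi lam
    by (rule boostLA.intro[OF G Pi(3) Gs psd lam Pi(2)])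
  have step: "boost_step vs lam N xs p = B.stp (1 / real N) p" if "snd p \<in> carrier_vec N" for p
  proof -
    have "krr_coef vs lam N xs (snd p) = (1 / real N) \<cdot>\<^sub>v (Pi *\<^sub>v snd p)"
      unfolding krr_eq G_def[symmetric] Pi(1) by simp
    moreover have "fitted_vals vs N xs ((1 / real N) \<cdot>\<^sub>v (Pi *\<^sub>v snd p)) = G *\<^sub>v (Pi *\<^sub>v snd p)"
      unfolding G_def using that Pi(3) by (intro fitted_eq) auto
    ultimately show ?thesis unfolding boost_step_def B.stp_def Let_def by simp
  qed
  have iter: "(boost_step vs lam N xs ^^ k) (0\<^sub>v N, y) = (B.stp (1 / real N) ^^ k) (0\<^sub>v N, y)" for k
  proof (induction k)
    case 0 then show ?case by simp
  next
    case (Suc k)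
    have "snd ((B.stp (1 / real N) ^^ k) (0\<^sub>v N, y)) \<in> carrier_vec N"
      using B.stp_inv[OF y, where s="1 / real N" and k=k] y by simp
    then show ?case using Suc step by simp
  qed
  define c where "c = boost_coef vs lam N xs y m"
  have c_eq: "c = fst ((B.stp (1 / real N) ^^ m) (0\<^sub>v N, y))" unfolding c_def boost_coef_def iter ..
  have c: "c \<in> carrier_vec N" using B.stp_inv[OF y, where s="1 / real N" and k=m] c_eq by simp
  have cb: "c \<bullet> (G *\<^sub>v c) \<le> (1 / real N) * (1 / real N) * real m / lam * (y \<bullet> y)"
    unfolding c_eq by (rule B.stp_bound[OF y]) simp
  have S: "(\<Sum>l<N. \<Sum>l'<N. c $ l * c $ l' * add_kernel vs (xs l) (xs l')) = real N * (c \<bullet> (G *\<^sub>v c))"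
    using c G N unfolding G_def gram_def
    by (simp add: scalar_prod_def lessThan_atLeast0 sum_distrib_left algebra_simps)
  have "real N * (c \<bullet> (G *\<^sub>v c)) \<le> real N * ((1 / real N) * (1 / real N) * real m / lam * (y \<bullet> y))"
    using cb N by (intro mult_left_mono) auto
  also have "\<dots> = real m / (lam * real N) * (y \<bullet> y)" using N by (simp add: field_simps)
  finally show ?thesis unfolding H_norm_def c_def[symmetric] S by (rule real_sqrt_le_mono)
qed



lemma second_moment:
  fixes M :: "real measure"
  assumes M: "prob_space M" and sM: "sets M = sets borel"
    and mu: "\<bar>\<integral>y. y \<partial>M\<bar> \<le> mu_max"
    and ne: "orlicz_set M (\<lambda>y. y - (\<integral>y. y \<partial>M)) \<noteq> {}"
    and le: "orlicz_norm M (\<lambda>y. y - (\<integral>y. y \<partial>M)) \<le> s_max"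
  shows "(\<integral>\<^sup>+y. ennreal (y^2) \<partial>M) \<le> ennreal (4 * (s_max + 1)^2 + 2 * mu_max^2)"
proof -
  interpret prob_space M by (rule M)
  note [measurable_cong] = sM
  define m where "m = (\<integral>y. y \<partial>M)"
  have "Inf (orlicz_set M (\<lambda>y. y - m)) < s_max + 1" using le unfolding orlicz_norm_def m_def by simp
  then obtain r where r: "r \<in> orlicz_set M (\<lambda>y. y - m)" "r < s_max + 1"
    using cInf_lessD ne unfolding m_def by blast
  have r0: "r > 0" and rint: "(\<integral>\<^sup>+ y. ennreal (exp ((y - m)^2 / r^2)) \<partial>M) \<le> 2"
    using r(1) unfolding orlicz_set_def by auto
  have pw: "ennreal (y^2) \<le> ennreal (2 * r^2) * ennreal (exp ((y - m)^2 / r^2)) + ennreal (2 * m^2)" for y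
  proof -
    have "(y - m)^2 / r^2 \<le> exp ((y - m)^2 / r^2)" using exp_ge_add_one_self[of "(y - m)^2 / r^2"] by linarith
    then have "(y - m)^2 \<le> r^2 * exp ((y - m)^2 / r^2)" using r0 by (simp add: field_simps)
    moreover have "y^2 \<le> 2 * (y - m)^2 + 2 * m^2"
    proof -
      have "2 * (y - m)^2 + 2 * m^2 - y^2 = (y - 2 * m)^2" by (simp add: power2_eq_square algebra_simps)
      moreover have "0 \<le> (y - 2 * m)^2" by simp
      ultimately show ?thesis by linarith
    qed
    ultimately have "y^2 \<le> 2 * r^2 * exp ((y - m)^2 / r^2) + 2 * m^2" by linarith
    then have "ennreal (y^2) \<le> ennreal (2 * r^2 * exp ((y - m)^2 / r^2) + 2 * m^2)" by (rule ennreal_leI)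
    also have "\<dots> = ennreal (2 * r^2) * ennreal (exp ((y - m)^2 / r^2)) + ennreal (2 * m^2)"
      by (simp add: ennreal_plus[symmetric] ennreal_mult[symmetric] del: ennreal_plus)
    finally show ?thesis .
  qed
  have "(\<integral>\<^sup>+y. ennreal (y^2) \<partial>M) \<le> (\<integral>\<^sup>+y. ennreal (2 * r^2) * ennreal (exp ((y - m)^2 / r^2)) + ennreal (2 * m^2) \<partial>M)"
    by (intro nn_integral_mono pw)
  also have "\<dots> = ennreal (2 * r^2) * (\<integral>\<^sup>+y. ennreal (exp ((y - m)^2 / r^2)) \<partial>M) + ennreal (2 * m^2)"
    by (subst nn_integral_add) (auto simp: nn_integral_cmult emeasure_space_1)
  also have "\<dots> \<le> ennreal (2 * r^2) * 2 + ennreal (2 * m^2)"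
    by (intro add_mono mult_left_mono rint) auto
  also have "\<dots> = ennreal (4 * r^2 + 2 * m^2)"
  proof -
    have e1: "ennreal (2 * r^2) * 2 = ennreal (4 * r^2)"
      using ennreal_mult[of "2 * r^2" 2] by simp
    show ?thesis unfolding e1 by (subst ennreal_plus) auto
  qed
  also have "\<dots> \<le> ennreal (4 * (s_max + 1)^2 + 2 * mu_max^2)"
  proof (rule ennreal_leI)
    have "r^2 \<le> (s_max + 1)^2" using r0 r(2) by (intro power_mono) auto
    moreover have "m^2 \<le> mu_max^2"
    proof -
      have "\<bar>m\<bar>^2 \<le> mu_max^2" using mu unfolding m_def by (intro power_mono) auto
      then show ?thesis by simp
    qed
    ultimately show "4 * r^2 + 2 * m^2 \<le> 4 * (s_max + 1)^2 + 2 * mu_max^2" by linarith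
  qed
  finally show ?thesis .
qed



lemma pair_meas: "(\<lambda>y::real. (x::real^'d, y)) \<in> borel \<rightarrow>\<^sub>M borel"
proof -
  have "(\<lambda>y::real. (x::real^'d, y)) \<in> borel \<rightarrow>\<^sub>M (borel \<Otimes>\<^sub>M borel)" by measurable
  then show ?thesis by (simp add: borel_prod)
qed

lemma kernel_meas:
  assumes Q: "Q \<in> borel \<rightarrow>\<^sub>M prob_algebra borel"
  shows "(\<lambda>x::real^'d. distr (Q x) borel (\<lambda>y::real. (x, y))) \<in> borel \<rightarrow>\<^sub>M prob_algebra borel"
proof (rule measurable_prob_algebraI)
  show "(\<lambda>x::real^'d. distr (Q x) borel (\<lambda>y::real. (x, y))) \<in> borel \<rightarrow>\<^sub>M subprob_algebra borel"
  proof (rule measurable_distr2)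
    have "(\<lambda>p::(real^'d) \<times> real. p) \<in> (borel \<Otimes>\<^sub>M borel) \<rightarrow>\<^sub>M borel" by (simp add: borel_prod)
    then show "(\<lambda>(x::real^'d, y::real). (x, y)) \<in> (borel \<Otimes>\<^sub>M borel) \<rightarrow>\<^sub>M borel" by (simp add: case_prod_beta)
    show "Q \<in> borel \<rightarrow>\<^sub>M subprob_algebra borel" using Q by (rule measurable_prob_algebraD)
  qed
  fix x :: "real^'d" assume "x \<in> space borel"
  have Qx: "Q x \<in> space (prob_algebra borel)" using measurable_space[OF Q] by simp
  then have "prob_space (Q x)" "sets (Q x) = sets borel" by (auto simp: space_prob_algebra)
  then show "prob_space (distr (Q x) borel (\<lambda>y. (x, y)))"
    using pair_meas[of x] by (intro prob_space.prob_space_distr) (auto cong: measurable_cong_sets)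
qed

lemma joint_facts:
  assumes PX: "prob_space PX" "sets PX = sets borel"
    and Q: "Q \<in> borel \<rightarrow>\<^sub>M prob_algebra borel"
  shows "prob_space (joint_law PX Q)" "sets (joint_law PX Q) = sets borel"
proof -
  have A: "PX \<in> space (prob_algebra borel)" using PX by (simp add: space_prob_algebra)
  show "prob_space (joint_law PX Q)" unfolding joint_law_def by (rule prob_space_bind'[OF A kernel_meas[OF Q]])
  show "sets (joint_law PX Q) = sets borel" unfolding joint_law_def by (rule sets_bind'[OF A kernel_meas[OF Q]])
qed

lemma joint_moment:
  fixes PX :: "(real^'d) measure"
  assumes PX: "prob_space PX" "sets PX = sets borel"
    and Q: "Q \<in> borel \<rightarrow>\<^sub>M prob_algebra borel"
    and C: "\<And>x. (\<integral>\<^sup>+y. ennreal (y^2) \<partial>Q x) \<le> ennreal C"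
  shows "(\<integral>\<^sup>+p. ennreal ((snd p)^2) \<partial>joint_law PX Q) \<le> ennreal C"
proof -
  have K: "(\<lambda>x::real^'d. distr (Q x) borel (\<lambda>y::real. (x, y))) \<in> PX \<rightarrow>\<^sub>M subprob_algebra borel"
    using measurable_prob_algebraD[OF kernel_meas[OF Q]] PX(2) by (simp cong: measurable_cong_sets)
  have "(\<lambda>p::(real^'d) \<times> real. ennreal ((snd p)^2)) \<in> borel_measurable (borel \<Otimes>\<^sub>M borel)" by measurable
  then have f: "(\<lambda>p::(real^'d) \<times> real. ennreal ((snd p)^2)) \<in> borel_measurable borel" by (simp add: borel_prod)
  have "(\<integral>\<^sup>+p. ennreal ((snd p)^2) \<partial>joint_law PX Q)
      = (\<integral>\<^sup>+x. \<integral>\<^sup>+p. ennreal ((snd p)^2) \<partial>distr (Q x) borel (\<lambda>y. (x, y)) \<partial>PX)"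
    unfolding joint_law_def by (rule nn_integral_bind[OF f K])
  also have "\<dots> = (\<integral>\<^sup>+x. \<integral>\<^sup>+y. ennreal (y^2) \<partial>Q x \<partial>PX)"
  proof (intro nn_integral_cong)
    fix x :: "real^'d"
    have Qx: "Q x \<in> space (prob_algebra borel)" using measurable_space[OF Q] by simp
    then have sQ: "sets (Q x) = sets borel" by (auto simp: space_prob_algebra)
    have T: "(\<lambda>y. (x, y)) \<in> Q x \<rightarrow>\<^sub>M borel" using pair_meas[of x] sQ by (simp cong: measurable_cong_sets)
    show "(\<integral>\<^sup>+p. ennreal ((snd p)^2) \<partial>distr (Q x) borel (\<lambda>y. (x, y))) = (\<integral>\<^sup>+y. ennreal (y^2) \<partial>Q x)"
      by (subst nn_integral_distr[OF T]) (simp_all add: f)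
  qed
  also have "\<dots> \<le> (\<integral>\<^sup>+x. ennreal C \<partial>PX)" by (intro nn_integral_mono C)
  also have "\<dots> = ennreal C" using prob_space.emeasure_space_1[OF PX(1)] by simp
  finally show ?thesis .
qed


lemma sample_moment:
  fixes J :: "((real^'d) \<times> real) measure"
  assumes J: "prob_space J" "sets J = sets borel"
    and C: "(\<integral>\<^sup>+p. ennreal ((snd p)^2) \<partial>J) \<le> ennreal C" and C0: "C \<ge> 0"
  shows "(\<integral>\<^sup>+w. ennreal (\<Sum>i<N. (snd (w i))^2) \<partial>PiM {..<N} (\<lambda>_. J)) \<le> ennreal (real N * C)"
proof -
  have "(\<lambda>p::(real^'d) \<times> real. ennreal ((snd p)^2)) \<in> borel_measurable (borel \<Otimes>\<^sub>M borel)" by measurable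
  then have fb: "(\<lambda>p::(real^'d) \<times> real. ennreal ((snd p)^2)) \<in> borel_measurable borel" by (simp add: borel_prod)
  then have f: "(\<lambda>p::(real^'d) \<times> real. ennreal ((snd p)^2)) \<in> borel_measurable J"
    using J(2) by (simp cong: measurable_cong_sets)
  have comp: "(\<integral>\<^sup>+w. ennreal ((snd (w i))^2) \<partial>PiM {..<N} (\<lambda>_. J)) = (\<integral>\<^sup>+p. ennreal ((snd p)^2) \<partial>J)"
    if i: "i \<in> {..<N}" for i
  proof -
    have d: "distr (PiM {..<N} (\<lambda>_. J)) J (\<lambda>\<omega>. \<omega> i) = J"
      using distr_PiM_component[of "{..<N}" "\<lambda>_. J" i] J(1) i by simp
    have "(\<integral>\<^sup>+p. ennreal ((snd p)^2) \<partial>J) = (\<integral>\<^sup>+p. ennreal ((snd p)^2) \<partial>distr (PiM {..<N} (\<lambda>_. J)) J (\<lambda>\<omega>. \<omega> i))"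
      using d by simp
    also have "\<dots> = (\<integral>\<^sup>+w. ennreal ((snd (w i))^2) \<partial>PiM {..<N} (\<lambda>_. J))"
      using i f by (subst nn_integral_distr) (auto intro: measurable_component_singleton)
    finally show ?thesis by simp
  qed
  have "(\<integral>\<^sup>+w. ennreal (\<Sum>i<N. (snd (w i))^2) \<partial>PiM {..<N} (\<lambda>_. J))
      = (\<integral>\<^sup>+w. (\<Sum>i<N. ennreal ((snd (w i))^2)) \<partial>PiM {..<N} (\<lambda>_. J))"
    by (intro nn_integral_cong) (simp add: sum_ennreal)
  also have "\<dots> = (\<Sum>i<N. \<integral>\<^sup>+w. ennreal ((snd (w i))^2) \<partial>PiM {..<N} (\<lambda>_. J))"
  proof (rule nn_integral_sum)
    fix i assume i: "i \<in> {..<N}"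
    have "(\<lambda>w. w i) \<in> PiM {..<N} (\<lambda>_. J) \<rightarrow>\<^sub>M J" using i by (rule measurable_component_singleton)
    then show "(\<lambda>w. ennreal ((snd (w i))^2)) \<in> borel_measurable (PiM {..<N} (\<lambda>_. J))"
      using f by (rule measurable_compose[where f="\<lambda>w. w i" and g="\<lambda>p. ennreal ((snd p)^2)"])
  qed
  also have "\<dots> = (\<Sum>i<N. \<integral>\<^sup>+p. ennreal ((snd p)^2) \<partial>J)" by (intro sum.cong refl comp)
  also have "\<dots> \<le> (\<Sum>i<N. ennreal C)" by (intro sum_mono C)
  also have "\<dots> = ennreal (real N * C)" using C0 by (simp add: ennreal_mult' ennreal_of_nat_eq_real_of_nat)
  finally show ?thesis .
qed

theorem lemma5:
  fixes PX :: "(real^'d::finite) measure"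
    and Q :: "real^'d \<Rightarrow> real measure"
    and vs :: "'d \<Rightarrow> real"
    and lam mu_max s_max sigma2_max C_u C_d :: real
    and B :: "nat \<Rightarrow> (nat \<Rightarrow> real^'d) set"
  assumes PX: "prob_space PX" "sets PX = sets borel"
    and Q_kernel: "Q \<in> borel \<rightarrow>\<^sub>M prob_algebra borel"
    and vs_pos: "\<And>j. vs j > 0"
    and lam_pos: "lam > 0"
    and mu_bdd: "\<And>x. integrable (Q x) (\<lambda>y. y) \<and> \<bar>\<integral>y. y \<partial>Q x\<bar> \<le> mu_max"
    and subgauss: "\<And>x. orlicz_set (Q x) (\<lambda>y. y - (\<integral>y. y \<partial>Q x)) \<noteq> {}
        \<and> 0 < orlicz_norm (Q x) (\<lambda>y. y - (\<integral>y. y \<partial>Q x))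
        \<and> orlicz_norm (Q x) (\<lambda>y. y - (\<integral>y. y \<partial>Q x)) \<le> s_max"
    and var_bdd: "\<And>x. (\<integral>y. (y - (\<integral>y. y \<partial>Q x))^2 \<partial>Q x) \<le> sigma2_max"
    and C_pos: "C_d > C_u" "C_u > 0"
    and B_meas: "\<And>N. B N \<in> sets (PiM {..<N} (\<lambda>_. borel))"
    and B_prob: "(\<lambda>N. measure (sample_law PX Q N)
                   {w \<in> space (sample_law PX Q N). sample_x N w \<in> B N}) \<longlonglongrightarrow> 1"
    and B_inv: "\<And>N xs. N \<ge> 1 \<Longrightarrow> xs \<in> B N \<Longrightarrow> invertible_mat (gram vs N xs)"
    and B_eig: "\<And>N xs. xs \<in> B N \<Longrightarrow>
        (let K0 = nat \<lfloor>ln (real N) / (2 * C_d + 1)\<rfloor>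
         in K0 \<ge> 1 \<longrightarrow>
            (\<Sum>k=K0..N. mu_hat (gram vs N xs) k) \<le> (\<Sum>k=K0..N. exp (- C_u * real k))
            \<and> mu_hat (gram vs N xs) K0 \<ge> exp (- C_d * real K0))"
  shows "\<exists>\<delta>>0. \<exists>h :: nat \<Rightarrow> real.
           h \<in> o(\<lambda>N. real N powr (1/4 - \<delta>)) \<and>
           (\<lambda>N. measure (sample_law PX Q N)
              {w \<in> space (sample_law PX Q N).
                 H_norm vs N (sample_x N w)
                   (boost_coef vs lam N (sample_x N w) (sample_y N w)
                      (nat \<lfloor>real N powr ((1/4) * (C_u + C_d + 1/2) / (C_d + 1))\<rfloor>)) > h N
                 \<and> sample_x N w \<in> B N}) \<longlonglongrightarrow> 0"
proof -
  define a where "a = (1/4) * (C_u + C_d + 1/2) / (C_d + 1)"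
  define e where "e = 1/2 - a"
  have Cd1: "C_d + 1 > 0" using C_pos by simp
  have e: "e > 0"
  proof -
    have a1: "a = (C_u + C_d + 1/2) / (4 * (C_d + 1))" unfolding a_def by simp
    have "(C_u + C_d + 1/2) < 1/2 * (4 * (C_d + 1))" using C_pos by simp
    then have "a < 1/2" unfolding a1 using Cd1 by (subst pos_divide_less_eq) auto
    then show ?thesis unfolding e_def by simp
  qed
  define h where "h N = real N powr (1/4 - e/4)" for N :: nat
  define C where "C = 4 * (s_max + 1)^2 + 2 * mu_max^2"
  have C0: "C \<ge> 0" unfolding C_def by simp
  define J where "J = joint_law PX Q"
  have J: "prob_space J" "sets J = sets borel" unfolding J_def using joint_facts[OF PX Q_kernel] by auto
  have Qx: "prob_space (Q x) \<and> sets (Q x) = sets borel" for x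
    using measurable_space[OF Q_kernel, of x] by (simp add: space_prob_algebra)
  have QC: "(\<integral>\<^sup>+y. ennreal (y^2) \<partial>Q x) \<le> ennreal C" for x
    unfolding C_def using Qx[of x] mu_bdd[of x] subgauss[of x] by (intro second_moment) auto
  have JC: "(\<integral>\<^sup>+p. ennreal ((snd p)^2) \<partial>J) \<le> ennreal C"
    unfolding J_def by (rule joint_moment[OF PX Q_kernel QC])
  define E where "E N = {w \<in> space (sample_law PX Q N).
                 H_norm vs N (sample_x N w)
                   (boost_coef vs lam N (sample_x N w) (sample_y N w)
                      (nat \<lfloor>real N powr ((1/4) * (C_u + C_d + 1/2) / (C_d + 1))\<rfloor>)) > h N
                 \<and> sample_x N w \<in> B N}" for N
  have bound: "measure (sample_law PX Q N) (E N) \<le> C / lam * real N powr (- e / 2)" if N: "N \<ge> 1" for N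
  proof -
    define M where "M = PiM {..<N} (\<lambda>_. J)"
    have SL: "sample_law PX Q N = M" unfolding M_def sample_law_def J_def ..
    have Mp: "prob_space M" unfolding M_def using J(1) by (intro prob_space_PiM) auto
    interpret Mp: prob_space M by (rule Mp)
    define m where "m = nat \<lfloor>real N powr a\<rfloor>"
    have m: "real m \<le> real N powr a"
    proof -
      have "0 \<le> real N powr a" by simp
      then show ?thesis unfolding m_def by linarith
    qed
    have Npos: "real N > 0" using N by simp
    have hpos: "h N > 0" unfolding h_def using Npos by simp
    define Y where "Y w = (\<Sum>i<N. (snd (w i))^2)" for w :: "nat \<Rightarrow> (real^'d) \<times> real"
    define cN where "cN = real m / (lam * real N * (h N)^2)"
    have cN0: "cN \<ge> 0" unfolding cN_def using lam_pos Npos by simp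
    have "(\<lambda>p::(real^'d) \<times> real. ennreal ((snd p)^2)) \<in> borel_measurable (borel \<Otimes>\<^sub>M borel)" by measurable
    then have "(\<lambda>p::(real^'d) \<times> real. ennreal ((snd p)^2)) \<in> borel_measurable borel" by (simp add: borel_prod)
    have "(\<lambda>p::(real^'d) \<times> real. (snd p)^2) \<in> borel_measurable (borel \<Otimes>\<^sub>M borel)" by measurable
    then have "(\<lambda>p::(real^'d) \<times> real. (snd p)^2) \<in> borel_measurable borel" by (simp add: borel_prod)
    then have sJ: "(\<lambda>p::(real^'d) \<times> real. (snd p)^2) \<in> borel_measurable J"
      using J(2) by (simp cong: measurable_cong_sets)
    have Ymeas: "(\<lambda>w. ennreal (Y w)) \<in> borel_measurable M"
    proof -
      have "(\<lambda>w. \<Sum>i<N. (snd (w i))^2) \<in> borel_measurable M"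
      proof (rule borel_measurable_sum)
        fix i assume i: "i \<in> {..<N}"
        have "(\<lambda>w. w i) \<in> M \<rightarrow>\<^sub>M J" unfolding M_def using i by (rule measurable_component_singleton)
        then show "(\<lambda>w. (snd (w i))^2) \<in> borel_measurable M"
          using sJ by (rule measurable_compose[where f="\<lambda>w. w i" and g="\<lambda>p. (snd p)^2"])
      qed
      then show ?thesis unfolding Y_def by measurable
    qed
    define S where "S = {w \<in> space M. 1 \<le> ennreal cN * ennreal (Y w)}"
    have S: "S \<in> sets M" unfolding S_def using Ymeas by measurable
    have sub: "E N \<subseteq> S"
    proof
      fix w assume w: "w \<in> E N"
      then have wM: "w \<in> space M" unfolding E_def SL by simp
      let ?y = "sample_y N w"
      have y: "?y \<in> carrier_vec N" unfolding sample_y_def by simp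
      have yy: "?y \<bullet> ?y = Y w"
        unfolding sample_y_def Y_def scalar_prod_def by (simp add: lessThan_atLeast0 power2_eq_square)
      have "h N < H_norm vs N (sample_x N w) (boost_coef vs lam N (sample_x N w) ?y m)"
        using w unfolding E_def m_def a_def by simp
      also have "\<dots> \<le> sqrt (real m / (lam * real N) * Y w)"
        using det_bound[OF vs_pos lam_pos _ y, where xs="sample_x N w" and m=m] N yy by simp
      finally have "h N < sqrt (real m / (lam * real N) * Y w)" .
      then have "(h N)^2 < real m / (lam * real N) * Y w"
      proof -
        assume hl: "h N < sqrt (real m / (lam * real N) * Y w)"
        then have tpos: "0 < real m / (lam * real N) * Y w" using hpos by (smt (verit) real_sqrt_le_0_iff)
        have "(h N)^2 < (sqrt (real m / (lam * real N) * Y w))^2"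
          using hl hpos by (intro power_strict_mono) auto
        then show ?thesis using tpos by simp
      qed
      then have "1 < cN * Y w" unfolding cN_def using hpos lam_pos Npos by (simp add: field_simps)
      then have "1 \<le> ennreal (cN * Y w)" by (simp add: ennreal_1[symmetric] del: ennreal_1)
      also have "\<dots> = ennreal cN * ennreal (Y w)"
      proof -
        have "0 \<le> Y w" unfolding Y_def by (intro sum_nonneg) auto
        then show ?thesis using cN0 by (simp add: ennreal_mult)
      qed
      finally show "w \<in> S" unfolding S_def using wM by simp
    qed
    have "emeasure M S \<le> ennreal cN * (\<integral>\<^sup>+w. ennreal (Y w) * indicator (space M) w \<partial>M)"
    proof -
      have "S = {w \<in> space M. 1 \<le> ennreal cN * ennreal (Y w)}" by (simp add: S_def)
      then show ?thesis using nn_integral_Markov_inequality[of "\<lambda>w. ennreal (Y w)" "space M" M "ennreal cN"] Ymeas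
        by simp
    qed
    also have "(\<integral>\<^sup>+w. ennreal (Y w) * indicator (space M) w \<partial>M) = (\<integral>\<^sup>+w. ennreal (Y w) \<partial>M)"
      by (intro nn_integral_cong) simp
    also have "(\<integral>\<^sup>+w. ennreal (Y w) \<partial>M) \<le> ennreal (real N * C)"
      unfolding M_def Y_def by (rule sample_moment[OF J JC C0])
    finally have "emeasure M S \<le> ennreal cN * ennreal (real N * C)"
      by (simp add: mult_left_mono)
    also have "\<dots> = ennreal (cN * (real N * C))" using cN0 C0 by (simp add: ennreal_mult)
    finally have "measure M S \<le> cN * (real N * C)"
      using cN0 C0 by (simp add: Mp.emeasure_eq_measure ennreal_le_iff)
    moreover have "measure M (E N) \<le> measure M S" using sub S by (rule Mp.finite_measure_mono)
    moreover have "cN * (real N * C) \<le> C / lam * real N powr (- e / 2)"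
    proof -
      have h2: "(h N)^2 = real N powr (1/2 - e/2)"
        unfolding h_def using Npos by (simp add: power2_eq_square powr_add[symmetric])
      have "cN * (real N * C) = C / lam * (real m / (h N)^2)"
        unfolding cN_def using Npos lam_pos by (simp add: field_simps)
      also have "\<dots> \<le> C / lam * (real N powr a / (h N)^2)"
        using m C0 lam_pos hpos by (intro mult_left_mono divide_right_mono) auto
      also have "real N powr a / (h N)^2 = real N powr (- e / 2)"
      proof -
        have "real N powr a / (h N)^2 = real N powr (a - (1/2 - e/2))" unfolding h2 by (simp add: powr_diff)
        also have "a - (1/2 - e/2) = - e / 2" unfolding e_def by (simp add: field_simps)
        finally show ?thesis .
      qed
      finally show ?thesis .
    qed
    ultimately show ?thesis unfolding SL by linarith
  qed
  have hs: "h \<in> o(\<lambda>N. real N powr (1/4 - e/8))"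
  proof (rule smalloI_tendsto)
    have "((\<lambda>N. real N powr (- e / 8)) \<longlongrightarrow> 0) sequentially"
      using e by (intro tendsto_neg_powr filterlim_real_sequentially) auto
    moreover have "\<forall>\<^sub>F N in sequentially. real N powr (- e / 8) = h N / real N powr (1/4 - e/8)"
      using eventually_gt_at_top[of 0]
      by eventually_elim (simp add: h_def powr_diff[symmetric])
    ultimately show "((\<lambda>N. h N / real N powr (1/4 - e/8)) \<longlongrightarrow> 0) sequentially"
      by (rule Lim_transform_eventually)
    show "\<forall>\<^sub>F N in sequentially. real N powr (1/4 - e/8) \<noteq> 0"
      using eventually_gt_at_top[of 0] by eventually_elim simp
  qed
  have lim: "((\<lambda>N. C / lam * real N powr (- e / 2)) \<longlongrightarrow> 0) sequentially"
  proof -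
    have "((\<lambda>N. real N powr (- e / 2)) \<longlongrightarrow> 0) sequentially"
      using e by (intro tendsto_neg_powr filterlim_real_sequentially) auto
    then show ?thesis by (rule tendsto_mult_right_zero)
  qed
  have limE: "(\<lambda>N. measure (sample_law PX Q N) (E N)) \<longlonglongrightarrow> 0"
  proof (rule tendsto_sandwich[OF _ _ tendsto_const lim])
    show "\<forall>\<^sub>F N in sequentially. 0 \<le> measure (sample_law PX Q N) (E N)" by simp
    show "\<forall>\<^sub>F N in sequentially. measure (sample_law PX Q N) (E N) \<le> C / lam * real N powr (- e / 2)"
      using eventually_ge_at_top[of 1] by eventually_elim (rule bound)
  qed
  have e8: "e / 8 > 0" using e by simp
  from e8 hs limE[unfolded E_def] show ?thesis by blast
qed

end
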